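(* Let $n\ge 2$ and $d\ge n+1$. For every Perazzo form $f$ of degree $d$ in $S$, the $h$-vector of $A_f$ satisfies $$h_i(A_f)\ \ge\ \min(2n+2,\ d+2,\ n+2+i)\quad\text{for }1\le i\le\lfloor d/2\rfloor,$$ (and $h_i=h_{d-i}$). Moreover this bound is attained: for $f=x_0u^{d-1}+x_1u^{d-2}v+\cdots+x_nu^{d-1-n}v^n$ one has $h_i(A_f)=\min(2n+2,d+2,n+2+i)$ for all $1\le i\le\lfloor d/2\rfloor$. Thus the componentwise minimum $h$-vector of $A_f$ over all Perazzo forms of degree $d$ is $h_i=\min(2n+2,d+2,n+2+i)$ for $1\le i\le \lfloor d/2\rfloor$, extended by symmetry $h_i=h_{d-i}$, with $h_0=h_d=1$.
   Context: $K$ is an algebraically closed field of characteristic zero. $S=K[x_0,\dots,x_n,u,v]$ and $R=K[y_0,\dots,y_n,U,V]$ acts on $S$ by differentiation ($y_i=\partial/\partial x_i$, $U=\partial/\partial u$, $V=\partial/\partial v$); write $\theta\circ f$ for this action. A Perazzo form of degree $d$ is $f=x_0p_0+x_1p_1+\cdots+x_np_n+g$ where $p_0,\dots,p_n\in K[u,v]_{d-1}$ are linearly independent but algebraically dependent forms and $g\in K[u,v]_d$. $\operatorname{Ann}_R(f)=\{\theta\in R:\theta\circ f=0\}$ and $A_f=R/\operatorname{Ann}_R(f)$ is a graded artinian Gorenstein algebra of socle degree $d$; its $h$-vector is $h_i=\dim_K [A_f]_i$, which equals the dimension of the $K$-span of all order-$i$ partial derivatives of $f$, and satisfies $h_i=h_{d-i}$.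 *)

theory Defs
  imports "HOL-Library.Poly_Mapping" "HOL-Computational_Algebra.Polynomial"
begin

text \<open>Polynomials in the variables indexed by natural numbers, over a field 'k.
  In S = K[x_0,...,x_n,u,v] the variable x_j is index j (j \<le> n),
  u is index n+1 and v is index n+2.\<close>

type_synonym 'k mpoly = "(nat \<Rightarrow>\<^sub>0 nat) \<Rightarrow>\<^sub>0 'k"

definition mdeg :: "(nat \<Rightarrow>\<^sub>0 nat) \<Rightarrow> nat" where
  "mdeg m = sum (Poly_Mapping.lookup m) (Poly_Mapping.keys m)"

definition homog_of :: "nat \<Rightarrow> 'k::zero mpoly \<Rightarrow> bool" where
  "homog_of e p \<longleftrightarrow> (\<forall>m\<in>Poly_Mapping.keys p. mdeg m = e)"

definition only_vars :: "nat set \<Rightarrow> 'k::zero mpoly \<Rightarrow> bool" where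
  "only_vars V p \<longleftrightarrow> (\<forall>m\<in>Poly_Mapping.keys p. Poly_Mapping.keys m \<subseteq> V)"

definition in_uv_forms :: "nat \<Rightarrow> nat \<Rightarrow> 'k::zero mpoly \<Rightarrow> bool" where
  "in_uv_forms n e p \<longleftrightarrow> only_vars {n+1, n+2} p \<and> homog_of e p"

definition mvar :: "nat \<Rightarrow> 'k::{zero,one} mpoly" where
  "mvar j = Poly_Mapping.single (Poly_Mapping.single j 1) 1"

definition mconst :: "'k::zero \<Rightarrow> 'k mpoly" where
  "mconst c = Poly_Mapping.single 0 c"

definition mscale :: "'k::field \<Rightarrow> 'k mpoly \<Rightarrow> 'k mpoly" where
  "mscale c p = Poly_Mapping.map (\<lambda>a. c * a) p"

definition msubst :: "(nat \<Rightarrow> 'k::comm_ring_1 mpoly) \<Rightarrow> 'k mpoly \<Rightarrow> 'k mpoly" where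
  "msubst \<sigma> F = (\<Sum>m\<in>Poly_Mapping.keys F. mconst (Poly_Mapping.lookup F m) * (\<Prod>j\<in>Poly_Mapping.keys m. \<sigma> j ^ Poly_Mapping.lookup m j))"

definition pdiff :: "nat \<Rightarrow> 'k::comm_ring_1 mpoly \<Rightarrow> 'k mpoly" where
  "pdiff j f = (\<Sum>m\<in>Poly_Mapping.keys f. Poly_Mapping.single (m - Poly_Mapping.single j 1)
                                (of_nat (Poly_Mapping.lookup m j) * Poly_Mapping.lookup f m))"

fun partials :: "nat \<Rightarrow> 'k::comm_ring_1 mpoly \<Rightarrow> 'k mpoly set" where
  "partials 0 f = {f}"
| "partials (Suc i) f = {pdiff j g | j g. g \<in> partials i f}"

text \<open>h_i(A_f) = dimension of the K-span of all order-i partial derivatives of f.\<close>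
definition hvec :: "'k::field mpoly \<Rightarrow> nat \<Rightarrow> nat" where
  "hvec f i = vector_space.dim mscale (partials i f)"

definition lin_indep_forms :: "nat \<Rightarrow> (nat \<Rightarrow> 'k::comm_ring_1 mpoly) \<Rightarrow> bool" where
  "lin_indep_forms n p \<longleftrightarrow>
     (\<forall>c. (\<Sum>j\<le>n. mconst (c j) * p j) = 0 \<longrightarrow> (\<forall>j\<le>n. c j = 0))"

definition alg_dep_forms :: "nat \<Rightarrow> (nat \<Rightarrow> 'k::comm_ring_1 mpoly) \<Rightarrow> bool" where
  "alg_dep_forms n p \<longleftrightarrow>
     (\<exists>F. F \<noteq> 0 \<and> only_vars {..n} F \<and> msubst p F = 0)"

definition perazzo_form :: "nat \<Rightarrow> nat \<Rightarrow> 'k::comm_ring_1 mpoly \<Rightarrow> bool" where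
  "perazzo_form n d f \<longleftrightarrow>
     (\<exists>p g. (\<forall>j\<le>n. in_uv_forms n (d - 1) (p j)) \<and>
            lin_indep_forms n p \<and> alg_dep_forms n p \<and>
            in_uv_forms n d g \<and>
            f = (\<Sum>j\<le>n. mvar j * p j) + g)"

definition alg_closed :: "'k::field itself \<Rightarrow> bool" where
  "alg_closed _ \<longleftrightarrow> (\<forall>q::'k poly. Polynomial.degree q > 0 \<longrightarrow> (\<exists>x. poly q x = 0))"

end

theory Submission
  imports Defs
begin

lemma lookup_mscale[simp]: "Poly_Mapping.lookup (mscale c p) m = c * Poly_Mapping.lookup p m"
  by (simp add: mscale_def Poly_Mapping.map.rep_eq when_def)

interpretation MS: vector_space "mscale :: 'k::field \<Rightarrow> 'k mpoly \<Rightarrow> 'k mpoly"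
  by unfold_locales (auto intro!: poly_mapping_eqI simp: lookup_add algebra_simps)

lemma mconst_mult: "mconst c * p = mscale c p"
  by (simp add: mconst_def mscale_def mult_map_scale_conv_mult)

lemma mon_eq_aux:
  fixes k m :: "nat \<Rightarrow>\<^sub>0 nat"
  shows "(k - Poly_Mapping.single j 1 = m \<and> Poly_Mapping.lookup k j \<noteq> 0) \<longleftrightarrow> k = m + Poly_Mapping.single j 1"
proof
  assume a: "k - Poly_Mapping.single j 1 = m \<and> Poly_Mapping.lookup k j \<noteq> 0"
  show "k = m + Poly_Mapping.single j 1"
  proof (rule poly_mapping_eqI)
    fix i show "Poly_Mapping.lookup k i = Poly_Mapping.lookup (m + Poly_Mapping.single j 1) i"
      using a by (auto simp: lookup_add lookup_minus lookup_single when_def)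
  qed
next
  assume a: "k = m + Poly_Mapping.single j 1"
  show "k - Poly_Mapping.single j 1 = m \<and> Poly_Mapping.lookup k j \<noteq> 0"
    using a by (auto simp: lookup_add)
qed

lemma lookup_pdiff:
  "Poly_Mapping.lookup (pdiff j f) m =
     of_nat (Poly_Mapping.lookup m j + 1) * Poly_Mapping.lookup f (m + Poly_Mapping.single j 1)"
proof -
  have "Poly_Mapping.lookup (pdiff j f) m =
     (\<Sum>k\<in>Poly_Mapping.keys f. (of_nat (Poly_Mapping.lookup k j) * Poly_Mapping.lookup f k
        when k - Poly_Mapping.single j 1 = m))"
    by (simp add: pdiff_def lookup_sum lookup_single)
  also have "\<dots> = (\<Sum>k\<in>Poly_Mapping.keys f. if k = m + Poly_Mapping.single j 1 then
       of_nat (Poly_Mapping.lookup k j) * Poly_Mapping.lookup f k else 0)"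
  proof (rule sum.cong)
    fix k assume "k \<in> Poly_Mapping.keys f"
    show "(of_nat (Poly_Mapping.lookup k j) * Poly_Mapping.lookup f k
        when k - Poly_Mapping.single j 1 = m) = (if k = m + Poly_Mapping.single j 1 then
       of_nat (Poly_Mapping.lookup k j) * Poly_Mapping.lookup f k else 0)"
      using mon_eq_aux[of k j m] by (cases "Poly_Mapping.lookup k j = 0") (auto simp: when_def)
  qed simp
  also have "\<dots> = of_nat (Poly_Mapping.lookup m j + 1) * Poly_Mapping.lookup f (m + Poly_Mapping.single j 1)"
    by (simp add: sum.delta lookup_add in_keys_iff)
  finally show ?thesis .
qed

lemma pdiff_add: "pdiff j (f + g) = pdiff j f + pdiff j g"
  by (rule poly_mapping_eqI) (simp add: lookup_pdiff lookup_add algebra_simps)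

lemma pdiff_mscale: "pdiff j (mscale c f) = mscale c (pdiff j f)"
  by (rule poly_mapping_eqI) (simp add: lookup_pdiff algebra_simps)

lemma pdiff_zero[simp]: "pdiff j 0 = 0"
  by (rule poly_mapping_eqI) (simp add: lookup_pdiff)

lemma pdiff_span: "x \<in> MS.span S \<Longrightarrow> pdiff j x \<in> MS.span (pdiff j ` S)"
proof (induct rule: MS.span_induct_alt)
  case base then show ?case by (simp add: MS.span_zero)
next
  case (step c x y)
  then show ?case by (simp add: pdiff_add pdiff_mscale MS.span_add MS.span_scale MS.span_base)
qed

lemma pdiff_commute: "pdiff j (pdiff l f) = pdiff l (pdiff j f)"
  by (rule poly_mapping_eqI) (auto simp: lookup_pdiff lookup_add lookup_single when_def algebra_simps)

lemma sorted_nth_ge: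
  fixes xs :: "nat list"
  assumes "sorted_wrt (<) xs" "j < length xs"
  shows "j \<le> xs ! j"
  using assms
proof (induct j)
  case 0 then show ?case by simp
next
  case (Suc j)
  then have "xs ! j < xs ! Suc j" by (simp add: sorted_wrt_nth_less)
  with Suc show ?case by simp
qed

lemma window_card:
  fixes T :: "nat set"
  assumes fin: "finite T" and Te: "T \<subseteq> {..e}" and ce: "c \<le> e"
  shows "min (card T) (c+1) \<le> card {b. b \<le> c \<and> (\<exists>t\<in>T. b \<le> t \<and> t \<le> b + (e-c))}"
proof -
  define xs where "xs = sorted_list_of_set T"
  have sx: "sorted_wrt (<) xs" unfolding xs_def by (simp add: strict_sorted_list_of_set)
  have lx: "length xs = card T" unfolding xs_def by simp
  have setx: "set xs = T" unfolding xs_def using fin by simp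
  define r where "r = min (card T) (c+1)"
  define \<beta> where "\<beta> j = max j (xs ! j - (e - c))" for j
  have mono: "\<beta> j < \<beta> j'" if "j < j'" "j' < length xs" for j j'
  proof -
    have "xs ! j < xs ! j'" using sx that by (simp add: sorted_wrt_nth_less)
    then show ?thesis unfolding \<beta>_def using that by auto
  qed
  have inj: "inj_on \<beta> {..<r}"
  proof (rule inj_onI)
    fix j j' assume a: "j \<in> {..<r}" "j' \<in> {..<r}" "\<beta> j = \<beta> j'"
    then have "j < length xs" "j' < length xs" by (auto simp: r_def lx)
    then show "j = j'" using a mono[of j j'] mono[of j' j] by (cases j j' rule: linorder_cases) auto
  qed
  have sub: "\<beta> ` {..<r} \<subseteq> {b. b \<le> c \<and> (\<exists>t\<in>T. b \<le> t \<and> t \<le> b + (e-c))}"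
  proof
    fix b assume "b \<in> \<beta> ` {..<r}"
    then obtain j where j: "j < r" "b = \<beta> j" by auto
    then have jl: "j < length xs" "j \<le> c" by (auto simp: r_def lx)
    have xin: "xs ! j \<in> T" using jl setx nth_mem by blast
    then have xe: "xs ! j \<le> e" using Te by auto
    have jx: "j \<le> xs ! j" using sorted_nth_ge[OF sx jl(1)] .
    show "b \<in> {b. b \<le> c \<and> (\<exists>t\<in>T. b \<le> t \<and> t \<le> b + (e-c))}"
      using j jl xin xe jx ce unfolding \<beta>_def by (intro CollectI conjI bexI[of _ "xs ! j"]) auto
  qed
  have "finite {b. b \<le> c \<and> (\<exists>t\<in>T. b \<le> t \<and> t \<le> b + (e-c))}" by auto
  then have "card (\<beta> ` {..<r}) \<le> card {b. b \<le> c \<and> (\<exists>t\<in>T. b \<le> t \<and> t \<le> b + (e-c))}"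
    using sub card_mono by blast
  moreover have "card (\<beta> ` {..<r}) = r" using inj card_image by fastforce
  ultimately show ?thesis unfolding r_def by simp
qed

lemma pdpow_add: "(pdiff j ^^ a) (x + y) = (pdiff j ^^ a) x + (pdiff j ^^ a) y"
  by (induct a) (simp_all add: pdiff_add)

lemma pdpow_mscale: "(pdiff j ^^ a) (mscale c x) = mscale c ((pdiff j ^^ a) x)"
  by (induct a) (simp_all add: pdiff_mscale)

lemma pdpow_zero[simp]: "(pdiff j ^^ a) 0 = 0"
  by (induct a) simp_all

lemma pdpow_commute: "pdiff l ((pdiff j ^^ a) x) = (pdiff j ^^ a) (pdiff l x)"
  by (induct a) (simp_all add: pdiff_commute)

lemma pdiff_sum: "pdiff j (sum F A) = (\<Sum>x\<in>A. pdiff j (F x))"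
  by (rule poly_mapping_eqI) (simp add: lookup_pdiff lookup_sum sum_distrib_left)

lemma lookup_pdpow:
  "Poly_Mapping.lookup ((pdiff j ^^ a) h) m =
     of_nat (pochhammer (Poly_Mapping.lookup m j + 1) a) * Poly_Mapping.lookup h (m + Poly_Mapping.single j a)"
proof (induct a arbitrary: m)
  case 0 then show ?case by simp
next
  case (Suc a)
  have "Poly_Mapping.lookup ((pdiff j ^^ Suc a) h) m =
      of_nat (Poly_Mapping.lookup m j + 1) * Poly_Mapping.lookup ((pdiff j ^^ a) h) (m + Poly_Mapping.single j 1)"
    by (simp add: lookup_pdiff)
  also have "\<dots> = of_nat (Poly_Mapping.lookup m j + 1) * (of_nat (pochhammer (Poly_Mapping.lookup m j + 2) a)
      * Poly_Mapping.lookup h (m + Poly_Mapping.single j 1 + Poly_Mapping.single j a))"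
    by (simp add: Suc lookup_add)
  also have "\<dots> = of_nat (pochhammer (Poly_Mapping.lookup m j + 1) (Suc a)) * Poly_Mapping.lookup h (m + Poly_Mapping.single j (Suc a))"
    by (simp add: pochhammer_rec add.assoc single_add[symmetric] add.commute[of 1 a] ring_distribs del: single_add)
  finally show ?case .
qed

lemma keys_pdpow: "m \<in> Poly_Mapping.keys ((pdiff j ^^ a) h) \<Longrightarrow> m + Poly_Mapping.single j a \<in> Poly_Mapping.keys h"
  by (metis in_keys_iff lookup_pdpow mult_zero_right)

lemma keys_pdiff: "m \<in> Poly_Mapping.keys (pdiff j h) \<Longrightarrow> m + Poly_Mapping.single j 1 \<in> Poly_Mapping.keys h"
  by (metis in_keys_iff lookup_pdiff mult_zero_right)

lemma poch_nz: "(of_nat (pochhammer (k+1) a :: nat) :: 'k::semiring_char_0) \<noteq> 0"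
  by (simp add: pochhammer_pos)

lemma partials_pdiff: "g \<in> partials k f \<Longrightarrow> pdiff j g \<in> partials (Suc k) f"
  by auto

lemma span_partials_pdiff:
  assumes "g \<in> MS.span (partials k f)" shows "pdiff j g \<in> MS.span (partials (Suc k) f)"
proof -
  have "pdiff j g \<in> MS.span (pdiff j ` partials k f)" using pdiff_span[OF assms] .
  moreover have "pdiff j ` partials k f \<subseteq> partials (Suc k) f" by auto
  ultimately show ?thesis using MS.span_mono by blast
qed

lemma span_partials_pdpow:
  assumes "g \<in> MS.span (partials k f)" shows "(pdiff j ^^ a) g \<in> MS.span (partials (k + a) f)"
proof (induct a)
  case 0 then show ?case using assms by simp
next
  case (Suc a) then show ?case using span_partials_pdiff[OF Suc] by (simp del: partials.simps)
qed

lemma only_vars_pdiff_zero: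
  assumes "only_vars V p" "j \<notin> V" shows "pdiff j p = 0"
proof (rule poly_mapping_eqI)
  fix m
  have "m + Poly_Mapping.single j 1 \<notin> Poly_Mapping.keys p"
  proof
    assume "m + Poly_Mapping.single j 1 \<in> Poly_Mapping.keys p"
    then have "Poly_Mapping.keys (m + Poly_Mapping.single j 1) \<subseteq> V" using assms(1) by (auto simp: only_vars_def)
    moreover have "j \<in> Poly_Mapping.keys (m + Poly_Mapping.single j 1)" by (simp add: in_keys_iff lookup_add)
    ultimately show False using assms(2) by auto
  qed
  then show "Poly_Mapping.lookup (pdiff j p) m = Poly_Mapping.lookup 0 m"
    by (simp add: lookup_pdiff in_keys_iff)
qed

lemma keys_add_mon: "Poly_Mapping.keys ((m::nat\<Rightarrow>\<^sub>0nat) + Poly_Mapping.single j a) = (if a = 0 then Poly_Mapping.keys m else insert j (Poly_Mapping.keys m))"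
  by (auto simp: in_keys_iff lookup_add lookup_single when_def split: if_splits)

lemma only_vars_pdiff:
  assumes "only_vars V p" shows "only_vars V (pdiff j p)"
  unfolding only_vars_def
proof
  fix m assume "m \<in> Poly_Mapping.keys (pdiff j p)"
  then have "m + Poly_Mapping.single j 1 \<in> Poly_Mapping.keys p" by (rule keys_pdiff)
  then have "Poly_Mapping.keys (m + Poly_Mapping.single j 1) \<subseteq> V" using assms by (auto simp: only_vars_def)
  then show "Poly_Mapping.keys m \<subseteq> V" by (auto simp: keys_add_mon)
qed

lemma only_vars_pdpow: "only_vars V p \<Longrightarrow> only_vars V ((pdiff j ^^ a) p)"
  by (induct a) (simp_all add: only_vars_pdiff)

lemma mon_eq_aux2:
  fixes m q :: "nat \<Rightarrow>\<^sub>0 nat"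
  shows "(m = Poly_Mapping.single k 1 + q) \<longleftrightarrow> (Poly_Mapping.lookup m k \<noteq> 0 \<and> q = m - Poly_Mapping.single k 1)"
  using mon_eq_aux[of m k q] by (auto simp: add.commute)

lemma Sum_any_ind: "(\<Sum>a. (if c = a then 1 else 0) * (X a :: 'k::semiring_1)) = X c"
proof -
  have "(\<lambda>a. (if c = a then 1 else 0) * X a) = (\<lambda>a. if c = a then X a else 0)" by auto
  then show ?thesis by (simp only: Sum_any.delta')
qed

lemma lookup_mvar_mult:
  "Poly_Mapping.lookup (mvar k * (p::'k::comm_ring_1 mpoly)) m =
    (if Poly_Mapping.lookup m k = 0 then 0 else Poly_Mapping.lookup p (m - Poly_Mapping.single k 1))"
proof -
  have "Poly_Mapping.lookup (mvar k * p) m =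
     (\<Sum>q. Poly_Mapping.lookup p q when m = Poly_Mapping.single k 1 + q)"
    unfolding mvar_def lookup_mult lookup_single when_def by (simp only: Sum_any_ind)
  also have "\<dots> = (\<Sum>q. if q = m - Poly_Mapping.single k 1 then
       (if Poly_Mapping.lookup m k = 0 then 0 else Poly_Mapping.lookup p q) else 0)"
    by (rule Sum_any.cong) (unfold when_def mon_eq_aux2, auto)
  also have "\<dots> = (if Poly_Mapping.lookup m k = 0 then 0 else Poly_Mapping.lookup p (m - Poly_Mapping.single k 1))"
    by simp
  finally show ?thesis .
qed


lemma only_vars_lookup0:
  assumes "only_vars V p" "Poly_Mapping.lookup m j \<noteq> 0" "j \<notin> V"
  shows "Poly_Mapping.lookup p m = 0"
proof (rule ccontr)
  assume "Poly_Mapping.lookup p m \<noteq> 0"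
  then have "m \<in> Poly_Mapping.keys p" by (simp add: in_keys_iff)
  then have "Poly_Mapping.keys m \<subseteq> V" using assms(1) by (auto simp: only_vars_def)
  moreover have "j \<in> Poly_Mapping.keys m" using assms(2) by (simp add: in_keys_iff)
  ultimately show False using assms(3) by auto
qed

lemma perazzo_pdiff:
  fixes p :: "nat \<Rightarrow> 'k::comm_ring_1 mpoly"
  assumes pv: "\<forall>k\<le>n. only_vars {n+1, n+2} (p k)" and gv: "only_vars {n+1,n+2} g" and j: "j \<le> n"
  shows "pdiff j ((\<Sum>k\<le>n. mvar k * p k) + g) = p j"
proof (rule poly_mapping_eqI)
  fix m :: "nat \<Rightarrow>\<^sub>0 nat"
  let ?m = "m + Poly_Mapping.single j 1"
  have jn: "j \<notin> {n+1, n+2}" using j by auto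
  have m1: "Poly_Mapping.lookup ?m j \<noteq> 0" by (simp add: lookup_add lookup_single)
  have g0: "Poly_Mapping.lookup g ?m = 0" using only_vars_lookup0[OF gv m1 jn] .
  have terms: "Poly_Mapping.lookup (mvar k * p k) ?m = (if k = j then Poly_Mapping.lookup (p j) m else 0)"
    if k: "k \<le> n" for k
  proof (cases "k = j")
    case True then show ?thesis by (simp add: lookup_mvar_mult lookup_add)
  next
    case False
    have "Poly_Mapping.lookup (?m - Poly_Mapping.single k 1) j \<noteq> 0"
      using False by (simp add: lookup_add lookup_minus lookup_single)
    then have "Poly_Mapping.lookup (p k) (?m - Poly_Mapping.single k 1) = 0"
      using only_vars_lookup0[OF _ _ jn] pv k by blast
    then show ?thesis using False by (simp add: lookup_mvar_mult)
  qed
  have "Poly_Mapping.lookup ((\<Sum>k\<le>n. mvar k * p k) + g) ?m = Poly_Mapping.lookup (p j) m"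
  proof -
    have "(\<Sum>k\<le>n. Poly_Mapping.lookup (mvar k * p k) ?m) = (\<Sum>k\<le>n. if k = j then Poly_Mapping.lookup (p j) m else 0)"
      by (rule sum.cong) (simp_all only: terms atMost_iff)
    also have "\<dots> = Poly_Mapping.lookup (p j) m" using j by simp
    finally show ?thesis by (simp only: lookup_add lookup_sum g0) simp
  qed
  moreover have "Poly_Mapping.lookup m j \<noteq> 0 \<Longrightarrow> Poly_Mapping.lookup (p j) m = 0"
    using only_vars_lookup0[OF _ _ jn] pv j by blast
  ultimately show "Poly_Mapping.lookup (pdiff j ((\<Sum>k\<le>n. mvar k * p k) + g)) m = Poly_Mapping.lookup (p j) m"
    by (cases "Poly_Mapping.lookup m j = 0") (simp_all add: lookup_pdiff)
qed

lemma mscale_one[simp]: "mscale 1 x = x"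
  by (rule poly_mapping_eqI) simp

lemma mscale_m1: "mscale (-1) x = - x"
  by (rule poly_mapping_eqI) simp

lemma card_le_dim_fin:
  assumes fS: "finite S" and BS: "B \<subseteq> MS.span S" and ind: "MS.independent B"
  shows "card B \<le> MS.dim S"
proof -
  obtain B' where B': "B' \<subseteq> S" "MS.independent B'" "S \<subseteq> MS.span B'" "card B' = MS.dim S"
    by (rule MS.basis_exists)
  have "MS.span S \<subseteq> MS.span B'" using B'(3) by (metis MS.span_mono MS.span_span)
  then have "B \<subseteq> MS.span B'" using BS by blast
  moreover have "finite B'" using B'(1) fS finite_subset by blast
  ultimately show ?thesis using MS.independent_span_bound[of B' B] ind B'(4) by simp
qed

lemma family_dim:
  fixes w :: "'a \<Rightarrow> 'k::field mpoly"
  assumes fS: "finite S" and fin: "finite I" and sp: "\<forall>x\<in>I. w x \<in> MS.span S"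
    and ind: "\<And>c. (\<Sum>x\<in>I. mscale (c x) (w x)) = 0 \<Longrightarrow> \<forall>x\<in>I. c x = 0"
  shows "card I \<le> MS.dim S"
proof -
  have inj: "inj_on w I"
  proof (rule inj_onI, rule ccontr)
    fix x y assume xy: "x \<in> I" "y \<in> I" "w x = w y" "x \<noteq> y"
    define c where "c z = (if z = x then 1 else if z = y then -1 else (0::'k))" for z
    have pt: "mscale (c z) (w z) = (if z = x then w x else 0) + (if z = y then - w y else 0)" for z
      using xy(4) by (cases "z = x"; cases "z = y") (simp_all add: c_def mscale_m1 MS.scale_zero_left)
    have "(\<Sum>z\<in>I. mscale (c z) (w z)) = w x - w y"
    proof -
      have "(\<Sum>z\<in>I. mscale (c z) (w z)) = (\<Sum>z\<in>I. (if z = x then w x else 0) + (if z = y then - w y else 0))"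
        by (rule sum.cong) (simp_all only: pt)
      also have "\<dots> = (\<Sum>z\<in>I. (if z = x then w x else 0)) + (\<Sum>z\<in>I. (if z = y then - w y else 0))"
        by (rule sum.distrib)
      also have "\<dots> = w x + - w y" using xy fin by (simp only: sum.delta if_True)
      finally show ?thesis by simp
    qed
    also have "\<dots> = 0" using xy by simp
    finally have "\<forall>z\<in>I. c z = 0" by (rule ind)
    then have "c x = 0" using xy(1) by blast
    then show False by (simp add: c_def)
  qed
  have indep: "MS.independent (w ` I)"
  proof
    assume "MS.dependent (w ` I)"
    from iffD1[OF MS.dependent_finite[OF finite_imageI[OF fin]] this]
    obtain u where u: "\<exists>v\<in>w ` I. u v \<noteq> 0" "(\<Sum>v\<in>w ` I. mscale (u v) v) = 0"
      by blast
    have "(\<Sum>x\<in>I. mscale (u (w x)) (w x)) = 0" using u(2) by (simp only: sum.reindex[OF inj] o_def)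
    then have "\<forall>x\<in>I. u (w x) = 0" by (rule ind)
    then show False using u(1) by auto
  qed
  have "w ` I \<subseteq> MS.span S" using sp by blast
  from card_le_dim_fin[OF fS this indep]
  have "card (w ` I) \<le> MS.dim S" .
  then show ?thesis using card_image[OF inj] by simp
qed

lemma uvmon:
  fixes k :: "nat \<Rightarrow>\<^sub>0 nat"
  assumes "Poly_Mapping.keys k \<subseteq> {a, b}" "a \<noteq> b" "mdeg k = e"
  shows "k = Poly_Mapping.single a (e - Poly_Mapping.lookup k b) + Poly_Mapping.single b (Poly_Mapping.lookup k b)
     \<and> Poly_Mapping.lookup k b \<le> e"
proof -
  have "mdeg k = sum (Poly_Mapping.lookup k) {a, b}"
    unfolding mdeg_def using assms(1) by (intro sum.mono_neutral_left) (auto simp: in_keys_iff)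
  then have e: "e = Poly_Mapping.lookup k a + Poly_Mapping.lookup k b" using assms by simp
  have "k = Poly_Mapping.single a (e - Poly_Mapping.lookup k b) + Poly_Mapping.single b (Poly_Mapping.lookup k b)"
  proof (rule poly_mapping_eqI)
    fix i show "Poly_Mapping.lookup k i = Poly_Mapping.lookup (Poly_Mapping.single a (e - Poly_Mapping.lookup k b) + Poly_Mapping.single b (Poly_Mapping.lookup k b)) i"
      using assms(1,2) e by (cases "i = a"; cases "i = b") (auto simp: lookup_add lookup_single in_keys_iff)
  qed
  then show ?thesis using e by simp
qed

lemma keys_mscale_add: "Poly_Mapping.keys (mscale c x + y) \<subseteq> Poly_Mapping.keys x \<union> Poly_Mapping.keys y"
  by (auto simp: in_keys_iff lookup_add)

lemma in_uv_span:
  assumes "\<forall>x\<in>S. in_uv_forms n e x" "q \<in> MS.span S"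
  shows "in_uv_forms n e q"
  using assms(2)
proof (induct rule: MS.span_induct_alt)
  case base then show ?case by (simp add: in_uv_forms_def only_vars_def homog_of_def)
next
  case (step c x y)
  then have "in_uv_forms n e x" using assms(1) by auto
  with step(2) show ?case using keys_mscale_add[of c x y]
    unfolding in_uv_forms_def only_vars_def homog_of_def by blast
qed

lemma partials_only_vars: "only_vars V f \<Longrightarrow> g \<in> partials k f \<Longrightarrow> only_vars V g"
  by (induct k arbitrary: g) (auto intro: only_vars_pdiff)

lemma finite_partials: "finite (partials k (f::'k::comm_ring_1 mpoly))"
proof -
  define V where "V = \<Union> (Poly_Mapping.keys ` Poly_Mapping.keys f)"
  have fV: "finite V" unfolding V_def by auto
  have ov: "only_vars V f" unfolding V_def only_vars_def by auto
  show ?thesis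
  proof (induct k)
    case 0 then show ?case by simp
  next
    case (Suc k)
    have "partials (Suc k) f \<subseteq> insert 0 ((\<lambda>(j, g). pdiff j g) ` (V \<times> partials k f))"
    proof
      fix h assume "h \<in> partials (Suc k) f"
      then obtain j g where h: "h = pdiff j g" "g \<in> partials k f" by auto
      show "h \<in> insert 0 ((\<lambda>(j, g). pdiff j g) ` (V \<times> partials k f))"
      proof (cases "j \<in> V")
        case True then show ?thesis using h by auto
      next
        case False
        then have "h = 0" using h only_vars_pdiff_zero[OF partials_only_vars[OF ov h(2)]] by simp
        then show ?thesis by simp
      qed
    qed
    moreover have "finite (insert 0 ((\<lambda>(j, g). pdiff j g) ` (V \<times> partials k f)))"
      using fV Suc by auto
    ultimately show ?case by (rule finite_subset)
  qed
qed

locale perz =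
  fixes n d :: nat and p :: "nat \<Rightarrow> 'k::field_char_0 mpoly" and g f :: "'k mpoly"
  assumes puv: "\<And>j. j \<le> n \<Longrightarrow> in_uv_forms n (d-1) (p j)"
    and indep: "lin_indep_forms n p"
    and guv: "in_uv_forms n d g"
    and fdef: "f = (\<Sum>j\<le>n. mvar j * p j) + g"
begin

definition "PP = MS.span (p ` {..n})"
definition "kap t = Poly_Mapping.single (n+1) (d-1-t) + Poly_Mapping.single (n+2) t"
definition "good q t \<longleftrightarrow> kap t \<in> Poly_Mapping.keys q \<and> (\<forall>k\<in>Poly_Mapping.keys q. Poly_Mapping.lookup k (n+2) \<le> t)"
definition "TT = {t. \<exists>q\<in>PP. good q t}"
definition "QQ t = (SOME q. q \<in> PP \<and> good q t)"
definition "Dop a b q = (pdiff (n+1) ^^ a) ((pdiff (n+2) ^^ b) q)"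

lemma pj: "j \<le> n \<Longrightarrow> pdiff j f = p j"
  unfolding fdef using puv guv by (intro perazzo_pdiff) (auto simp: in_uv_forms_def)

lemma PP_uv: "q \<in> PP \<Longrightarrow> in_uv_forms n (d-1) q"
  unfolding PP_def by (rule in_uv_span) (use puv in auto)

lemma PP_key: assumes "q \<in> PP" "k \<in> Poly_Mapping.keys q"
  shows "k = kap (Poly_Mapping.lookup k (n+2)) \<and> Poly_Mapping.lookup k (n+2) \<le> d-1"
proof -
  have "Poly_Mapping.keys k \<subseteq> {n+1, n+2}" "mdeg k = d-1"
    using PP_uv[OF assms(1)] assms(2) by (auto simp: in_uv_forms_def only_vars_def homog_of_def)
  from uvmon[OF this(1) _ this(2)] show ?thesis unfolding kap_def by simp
qed

lemma lookup_kap: "Poly_Mapping.lookup (kap t) (n+2) = t"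
  by (simp add: kap_def lookup_add lookup_single)

lemma TT_sub: "TT \<subseteq> {..d-1}"
proof
  fix t assume "t \<in> TT"
  then obtain q where "q \<in> PP" "kap t \<in> Poly_Mapping.keys q" by (auto simp: TT_def good_def)
  from PP_key[OF this] lookup_kap[of t] show "t \<in> {..d-1}" by simp
qed

lemma finite_TT: "finite TT"
  using TT_sub finite_subset by blast

lemma QQ: "t \<in> TT \<Longrightarrow> QQ t \<in> PP \<and> good (QQ t) t"
  unfolding QQ_def TT_def by (rule someI_ex) auto

lemma PP_partials: "PP \<subseteq> MS.span (partials 1 f)"
proof -
  have "p ` {..n} \<subseteq> partials 1 f"
  proof
    fix x assume "x \<in> p ` {..n}"
    then obtain j where "j \<le> n" "x = p j" by auto
    then have "x = pdiff j f" using pj by simp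
    then show "x \<in> partials 1 f" by auto
  qed
  then show ?thesis unfolding PP_def by (rule MS.span_mono)
qed

lemma below_step:
  assumes q: "q \<in> PP" and b: "\<forall>k\<in>Poly_Mapping.keys q. Poly_Mapping.lookup k (n+2) \<le> t"
    and nk: "kap t \<notin> Poly_Mapping.keys q" and k: "k \<in> Poly_Mapping.keys q"
  shows "Poly_Mapping.lookup k (n+2) < t"
proof -
  have "k = kap (Poly_Mapping.lookup k (n+2))" using PP_key[OF q k] by simp
  then have "Poly_Mapping.lookup k (n+2) \<noteq> t" using nk k by metis
  then show ?thesis using b k by fastforce
qed

lemma span_QQ: "\<forall>q\<in>PP. (\<forall>k\<in>Poly_Mapping.keys q. Poly_Mapping.lookup k (n+2) \<le> t) \<longrightarrow> q \<in> MS.span (QQ ` TT)"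
proof (induct t)
  case 0
  show ?case
  proof (intro ballI impI)
    fix q assume q: "q \<in> PP" and b: "\<forall>k\<in>Poly_Mapping.keys q. Poly_Mapping.lookup k (n+2) \<le> (0::nat)"
    have case1: "q' \<in> MS.span (QQ ` TT)" if q': "q' \<in> PP" "\<forall>k\<in>Poly_Mapping.keys q'. Poly_Mapping.lookup k (n+2) \<le> (0::nat)"
      "kap 0 \<notin> Poly_Mapping.keys q'" for q'
    proof -
      have "\<And>k. k \<in> Poly_Mapping.keys q' \<Longrightarrow> False" using below_step[OF q'] by blast
      then have "Poly_Mapping.keys q' = {}" by blast
      then have "q' = 0" by simp
      then show ?thesis by (simp add: MS.span_zero)
    qed
    show "q \<in> MS.span (QQ ` TT)"
    proof (cases "kap 0 \<in> Poly_Mapping.keys q")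
      case False then show ?thesis using case1 q b by blast
    next
      case True
      then have t: "0 \<in> TT" using q b by (auto simp: TT_def good_def)
      note Q = QQ[OF t]
      define c where "c = Poly_Mapping.lookup q (kap 0) / Poly_Mapping.lookup (QQ 0) (kap 0)"
      define r where "r = q - mscale c (QQ 0)"
      have nz: "Poly_Mapping.lookup (QQ 0) (kap 0) \<noteq> 0" using Q by (simp add: good_def in_keys_iff)
      have r: "r \<in> PP" unfolding r_def PP_def using q Q unfolding PP_def by (intro MS.span_diff MS.span_scale) auto
      have rk: "Poly_Mapping.keys r \<subseteq> Poly_Mapping.keys q \<union> Poly_Mapping.keys (QQ 0)"
        by (auto simp: r_def in_keys_iff lookup_minus)
      have "kap 0 \<notin> Poly_Mapping.keys r" using nz by (simp add: r_def in_keys_iff lookup_minus c_def)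
      moreover have "\<forall>k\<in>Poly_Mapping.keys r. Poly_Mapping.lookup k (n+2) \<le> (0::nat)"
        using rk b Q by (auto simp: good_def)
      ultimately have "r \<in> MS.span (QQ ` TT)" using case1 r by blast
      moreover have "QQ 0 \<in> MS.span (QQ ` TT)" using t by (intro MS.span_base) auto
      ultimately have "r + mscale c (QQ 0) \<in> MS.span (QQ ` TT)" by (intro MS.span_add MS.span_scale)
      then show ?thesis by (simp add: r_def)
    qed
  qed
next
  case (Suc t)
  show ?case
  proof (intro ballI impI)
    fix q assume q: "q \<in> PP" and b: "\<forall>k\<in>Poly_Mapping.keys q. Poly_Mapping.lookup k (n+2) \<le> Suc t"
    have case1: "q' \<in> MS.span (QQ ` TT)" if q': "q' \<in> PP" "\<forall>k\<in>Poly_Mapping.keys q'. Poly_Mapping.lookup k (n+2) \<le> Suc t"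
      "kap (Suc t) \<notin> Poly_Mapping.keys q'" for q'
    proof -
      have "\<forall>k\<in>Poly_Mapping.keys q'. Poly_Mapping.lookup k (n+2) \<le> t" using below_step[OF q'] by fastforce
      then show ?thesis using Suc q'(1) by blast
    qed
    show "q \<in> MS.span (QQ ` TT)"
    proof (cases "kap (Suc t) \<in> Poly_Mapping.keys q")
      case False then show ?thesis using case1 q b by blast
    next
      case True
      then have t: "Suc t \<in> TT" using q b by (auto simp: TT_def good_def)
      note Q = QQ[OF t]
      define c where "c = Poly_Mapping.lookup q (kap (Suc t)) / Poly_Mapping.lookup (QQ (Suc t)) (kap (Suc t))"
      define r where "r = q - mscale c (QQ (Suc t))"
      have nz: "Poly_Mapping.lookup (QQ (Suc t)) (kap (Suc t)) \<noteq> 0" using Q by (simp add: good_def in_keys_iff)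
      have r: "r \<in> PP" unfolding r_def PP_def using q Q unfolding PP_def by (intro MS.span_diff MS.span_scale) auto
      have rk: "Poly_Mapping.keys r \<subseteq> Poly_Mapping.keys q \<union> Poly_Mapping.keys (QQ (Suc t))"
        by (auto simp: r_def in_keys_iff lookup_minus)
      have "kap (Suc t) \<notin> Poly_Mapping.keys r" using nz by (simp add: r_def in_keys_iff lookup_minus c_def)
      moreover have "\<forall>k\<in>Poly_Mapping.keys r. Poly_Mapping.lookup k (n+2) \<le> Suc t"
        using rk b Q by (auto simp: good_def)
      ultimately have "r \<in> MS.span (QQ ` TT)" using case1 r by blast
      moreover have "QQ (Suc t) \<in> MS.span (QQ ` TT)" using t by (intro MS.span_base) auto
      ultimately have "r + mscale c (QQ (Suc t)) \<in> MS.span (QQ ` TT)" by (intro MS.span_add MS.span_scale)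
      then show ?thesis by (simp add: r_def)
    qed
  qed
qed

lemma card_TT: "n + 1 \<le> card TT"
proof -
  have "card {..n} \<le> MS.dim (p ` {..n})"
  proof (rule family_dim)
    show "\<forall>x\<in>{..n}. p x \<in> MS.span (p ` {..n})" by (auto intro: MS.span_base)
    fix c assume "(\<Sum>x\<le>n. mscale (c x) (p x)) = 0"
    then show "\<forall>x\<in>{..n}. c x = 0" using indep by (simp add: lin_indep_forms_def mconst_mult)
  qed auto
  moreover have "MS.dim (p ` {..n}) \<le> card (QQ ` TT)"
  proof (rule MS.dim_le_card)
    show "p ` {..n} \<subseteq> MS.span (QQ ` TT)"
    proof
      fix x assume x: "x \<in> p ` {..n}"
      then have xP: "x \<in> PP" unfolding PP_def by (rule MS.span_base)
      have "\<forall>k\<in>Poly_Mapping.keys x. Poly_Mapping.lookup k (n+2) \<le> d - 1"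
        using PP_key[OF xP] by blast
      then show "x \<in> MS.span (QQ ` TT)" using span_QQ xP by blast
    qed
  qed (use finite_TT in auto)
  moreover have "card (QQ ` TT) \<le> card TT" using finite_TT by (rule card_image_le)
  ultimately show ?thesis by simp
qed

lemma poch_nz': "(of_nat (pochhammer (Suc k) a :: nat) :: 'b::semiring_char_0) \<noteq> 0"
  using poch_nz[of k a] by simp

lemma poch_nat_nz: "pochhammer (Suc k) a \<noteq> (0::nat)"
  using pochhammer_pos[of "Suc k" a] by simp

lemma Dop_lookup:
  "Poly_Mapping.lookup (Dop a b q) m =
     of_nat (pochhammer (Poly_Mapping.lookup m (n+1) + 1) a) * of_nat (pochhammer (Poly_Mapping.lookup m (n+2) + 1) b)
     * Poly_Mapping.lookup q (m + Poly_Mapping.single (n+1) a + Poly_Mapping.single (n+2) b)"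
  unfolding Dop_def by (simp add: lookup_pdpow lookup_add lookup_single)

lemma Dop_keys: "m \<in> Poly_Mapping.keys (Dop a b q) \<Longrightarrow>
   m + Poly_Mapping.single (n+1) a + Poly_Mapping.single (n+2) b \<in> Poly_Mapping.keys q"
  by (metis Dop_lookup in_keys_iff mult_zero_right)

lemma Dop_add: "Dop a b (x + y) = Dop a b x + Dop a b y"
  unfolding Dop_def by (simp add: pdpow_add)

lemma Dop_mscale: "Dop a b (mscale c x) = mscale c (Dop a b x)"
  unfolding Dop_def by (simp add: pdpow_mscale)

lemma Dop_zero[simp]: "Dop a b 0 = 0"
  unfolding Dop_def by simp

lemma Dop_pdiff: "pdiff j (Dop a b x) = Dop a b (pdiff j x)"
  unfolding Dop_def by (simp add: pdpow_commute)

lemma Dop_span: "x \<in> MS.span (partials k f) \<Longrightarrow> Dop a b x \<in> MS.span (partials (k + b + a) f)"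
  unfolding Dop_def by (intro span_partials_pdpow)

lemma Dop_only_vars: "only_vars V x \<Longrightarrow> only_vars V (Dop a b x)"
  unfolding Dop_def by (intro only_vars_pdpow)

lemma Dop_sum: "Dop a b (sum F A) = (\<Sum>x\<in>A. Dop a b (F x))"
  by (induct A rule: infinite_finite_induct) (simp_all add: Dop_add)

lemma Dop_bound:
  assumes "good q t" "m \<in> Poly_Mapping.keys (Dop a b q)"
  shows "Poly_Mapping.lookup m (n+2) + b \<le> t"
proof -
  have "m + Poly_Mapping.single (n+1) a + Poly_Mapping.single (n+2) b \<in> Poly_Mapping.keys q"
    using Dop_keys[OF assms(2)] .
  then have "Poly_Mapping.lookup (m + Poly_Mapping.single (n+1) a + Poly_Mapping.single (n+2) b) (n+2) \<le> t"
    using assms(1) by (auto simp: good_def)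
  then show ?thesis by (simp add: lookup_add lookup_single)
qed

lemma Dop_top:
  fixes q :: "'k mpoly"
  assumes "good q t" "a \<le> d - 1 - t" "b \<le> t"
  shows "Poly_Mapping.lookup (Dop a b q) (Poly_Mapping.single (n+1) (d-1-t-a) + Poly_Mapping.single (n+2) (t-b)) \<noteq> 0"
proof -
  have e: "Poly_Mapping.single (n+1) (d-1-t-a) + Poly_Mapping.single (n+2) (t-b) + Poly_Mapping.single (n+1) a + Poly_Mapping.single (n+2) b = kap t"
    unfolding kap_def using assms(2,3) by (intro poly_mapping_eqI) (auto simp: lookup_add lookup_single when_def)
  have "Poly_Mapping.lookup q (kap t) \<noteq> 0" using assms(1) by (simp add: good_def in_keys_iff)
  moreover have "\<And>x y. (of_nat (pochhammer (x + 1) y :: nat) :: 'k) \<noteq> 0" by (rule poch_nz)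
    ultimately show ?thesis unfolding Dop_lookup e by simp
qed

lemma PP_only_vars: "q \<in> PP \<Longrightarrow> only_vars {n+1, n+2} q"
  using PP_uv by (simp add: in_uv_forms_def)

lemma L_vanish:
  fixes cB :: "nat \<Rightarrow> 'k" and SB :: "nat set"
  assumes gen: "\<And>j. j \<le> n \<Longrightarrow> (\<Sum>b\<in>SB. mscale (cB b) (Dop (i - b) b (p j))) = 0"
    and q: "q \<in> PP"
  shows "(\<Sum>b\<in>SB. mscale (cB b) (Dop (i - b) b q)) = 0"
  using q unfolding PP_def
proof (induct rule: MS.span_induct_alt)
  case base then show ?case by (simp add: MS.scale_zero_right)
next
  case (step c x y)
  then obtain j where j: "j \<le> n" "x = p j" by auto
  have "(\<Sum>b\<in>SB. mscale (cB b) (Dop (i - b) b (mscale c x + y)))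
      = mscale c (\<Sum>b\<in>SB. mscale (cB b) (Dop (i - b) b x)) + (\<Sum>b\<in>SB. mscale (cB b) (Dop (i - b) b y))"
    by (simp add: Dop_add Dop_mscale MS.scale_right_distrib MS.scale_sum_right sum.distrib MS.scale_scale mult.commute)
  then show ?case using step(2) gen[OF j(1)] j(2) by (simp add: MS.scale_zero_right)
qed

lemma B_zero:
  fixes cB :: "nat \<Rightarrow> 'k"
  assumes gen: "\<And>j. j \<le> n \<Longrightarrow> (\<Sum>b\<in>SB. mscale (cB b) (Dop (i - b) b (p j))) = 0"
    and SBdef: "SB = {b. b \<le> i \<and> (\<exists>t\<in>TT. b \<le> t \<and> t \<le> b + (d-1-i))}"
    and ie: "i \<le> d - 1"
  shows "\<forall>b\<in>SB. cB b = 0"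
proof (rule ccontr)
  assume "\<not> (\<forall>b\<in>SB. cB b = 0)"
  then have ne: "{b\<in>SB. cB b \<noteq> 0} \<noteq> {}" by auto
  have finSB: "finite SB" unfolding SBdef by auto
  define b1 where "b1 = Min {b\<in>SB. cB b \<noteq> 0}"
  have b1: "b1 \<in> SB" "cB b1 \<noteq> 0" using Min_in[OF _ ne] finSB unfolding b1_def by auto
  have b1min: "b1 \<le> b" if "b \<in> SB" "cB b \<noteq> 0" for b
    unfolding b1_def using that finSB by (intro Min_le) auto
  obtain t where t: "t \<in> TT" "b1 \<le> t" "t \<le> b1 + (d-1-i)" using b1(1) unfolding SBdef by auto
  note Q = QQ[OF t(1)]
  define q where "q = QQ t"
  have gq: "good q t" and qP: "q \<in> PP" using Q by (auto simp: q_def)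
  define \<mu> where "\<mu> = Poly_Mapping.single (n+1) (d-1-t-(i-b1)) + Poly_Mapping.single (n+2) (t-b1)"
  have a_le: "i - b1 \<le> d - 1 - t" using t ie by linarith
  have top: "Poly_Mapping.lookup (Dop (i - b1) b1 q) \<mu> \<noteq> 0"
    unfolding \<mu>_def by (rule Dop_top[OF gq a_le t(2)])
  have "(\<Sum>b\<in>SB. mscale (cB b) (Dop (i - b) b q)) = 0" by (rule L_vanish[OF gen qP])
  then have "0 = Poly_Mapping.lookup (\<Sum>b\<in>SB. mscale (cB b) (Dop (i - b) b q)) \<mu>" by simp
  also have "\<dots> = (\<Sum>b\<in>SB. cB b * Poly_Mapping.lookup (Dop (i - b) b q) \<mu>)"
    by (simp add: lookup_sum)
  also have "\<dots> = (\<Sum>b\<in>SB. if b = b1 then cB b1 * Poly_Mapping.lookup (Dop (i - b1) b1 q) \<mu> else 0)"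
  proof (rule sum.cong)
    fix b assume b: "b \<in> SB"
    show "cB b * Poly_Mapping.lookup (Dop (i - b) b q) \<mu> = (if b = b1 then cB b1 * Poly_Mapping.lookup (Dop (i - b1) b1 q) \<mu> else 0)"
    proof (cases "b = b1")
      case False
      show ?thesis
      proof (cases "cB b = 0")
        case False
        then have "b1 < b" using b1min[OF b] \<open>b \<noteq> b1\<close> by simp
        have "\<mu> \<notin> Poly_Mapping.keys (Dop (i - b) b q)"
        proof
          assume "\<mu> \<in> Poly_Mapping.keys (Dop (i - b) b q)"
          from Dop_bound[OF gq this] have "Poly_Mapping.lookup \<mu> (n+2) + b \<le> t" .
          then show False using \<open>b1 < b\<close> t(2) by (simp add: \<mu>_def lookup_add lookup_single)
        qed
        then show ?thesis using \<open>b \<noteq> b1\<close> by (simp add: in_keys_iff)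
      qed (simp add: \<open>b \<noteq> b1\<close>)
    qed simp
  qed simp
  also have "\<dots> = cB b1 * Poly_Mapping.lookup (Dop (i - b1) b1 q) \<mu>"
    using b1(1) finSB by simp
  finally show False using b1(2) top by simp
qed

lemma A_zero:
  fixes cA :: "nat \<Rightarrow> 'k"
  assumes finSA: "finite SA" and ke: "k \<le> d - 1"
    and SAd: "\<And>s. s \<in> SA \<Longrightarrow> s \<le> d-1-k"
    and tA: "\<And>s. s \<in> SA \<Longrightarrow> tA s \<in> TT \<and> s \<le> tA s \<and> tA s \<le> s + k"
    and sum0: "(\<Sum>s\<in>SA. mscale (cA s) (Dop (k - (tA s - s)) (tA s - s) (QQ (tA s)))) = 0"
  shows "\<forall>s\<in>SA. cA s = 0"
proof (rule ccontr)
  assume "\<not> (\<forall>s\<in>SA. cA s = 0)"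
  then have ne: "{s\<in>SA. cA s \<noteq> 0} \<noteq> {}" by auto
  define s1 where "s1 = Max {s\<in>SA. cA s \<noteq> 0}"
  have s1: "s1 \<in> SA" "cA s1 \<noteq> 0" using Max_in[OF _ ne] finSA unfolding s1_def by auto
  have s1max: "s \<le> s1" if "s \<in> SA" "cA s \<noteq> 0" for s
    unfolding s1_def using that finSA by (intro Max_ge) auto
  define t where "t = tA s1"
  have t: "t \<in> TT" "s1 \<le> t" "t \<le> s1 + k" using tA[OF s1(1)] by (auto simp: t_def)
  have te: "t \<le> d - 1" using TT_sub t(1) by auto
  have s1d: "s1 \<le> d-1-k" using SAd[OF s1(1)] .
  define w where "w s = Dop (k - (tA s - s)) (tA s - s) (QQ (tA s))" for s
  define \<mu> where "\<mu> = Poly_Mapping.single (n+1) (d-1-t-(k - (t - s1))) + Poly_Mapping.single (n+2) (t-(t - s1))"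
  have a_le: "k - (t - s1) \<le> d - 1 - t" using t te s1d ke by arith
  have gq: "good (QQ t) t" using QQ[OF t(1)] by simp
  have top: "Poly_Mapping.lookup (w s1) \<mu> \<noteq> 0"
    unfolding \<mu>_def w_def t_def[symmetric] by (rule Dop_top[OF gq a_le]) simp
  have "0 = Poly_Mapping.lookup (\<Sum>s\<in>SA. mscale (cA s) (w s)) \<mu>" using sum0 by (simp add: w_def)
  also have "\<dots> = (\<Sum>s\<in>SA. cA s * Poly_Mapping.lookup (w s) \<mu>)"
    by (simp add: lookup_sum)
  also have "\<dots> = (\<Sum>s\<in>SA. if s = s1 then cA s1 * Poly_Mapping.lookup (w s1) \<mu> else 0)"
  proof (rule sum.cong)
    fix s assume s: "s \<in> SA"
    show "cA s * Poly_Mapping.lookup (w s) \<mu> = (if s = s1 then cA s1 * Poly_Mapping.lookup (w s1) \<mu> else 0)"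
    proof (cases "s = s1")
      case False
      show ?thesis
      proof (cases "cA s = 0")
        case False
        then have "s < s1" using s1max[OF s] \<open>s \<noteq> s1\<close> by simp
        have ts: "tA s \<in> TT" "s \<le> tA s" using tA[OF s] by auto
        have gs: "good (QQ (tA s)) (tA s)" using QQ[OF ts(1)] by simp
        have "\<mu> \<notin> Poly_Mapping.keys (w s)"
        proof
          assume "\<mu> \<in> Poly_Mapping.keys (w s)"
          from Dop_bound[OF gs this[unfolded w_def]] have "Poly_Mapping.lookup \<mu> (n+2) + (tA s - s) \<le> tA s" .
          then show False using \<open>s < s1\<close> t(2) ts(2) by (simp add: \<mu>_def lookup_add lookup_single)
        qed
        then show ?thesis using \<open>s \<noteq> s1\<close> by (simp add: in_keys_iff)
      qed (simp add: \<open>s \<noteq> s1\<close>)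
    qed simp
  qed simp
  also have "\<dots> = cA s1 * Poly_Mapping.lookup (w s1) \<mu>"
    using s1(1) finSA by simp
  finally show False using s1(2) top by simp
qed

lemma lower:
  assumes i1: "1 \<le> i" and id: "i \<le> d div 2" and dn: "n + 1 \<le> d" and n1: "1 \<le> n"
  shows "min (2*n+2) (min (d+2) (n+2+i)) \<le> hvec f i"
proof -
  define k where "k = i - 1"
  have ie: "i \<le> d - 1" using id dn n1 by linarith
  have ke: "k \<le> d - 1" using ie by (simp add: k_def)
  define SA where "SA = {b. b \<le> d-1-k \<and> (\<exists>t\<in>TT. b \<le> t \<and> t \<le> b + (d-1-(d-1-k)))}"
  define SB where "SB = {b. b \<le> i \<and> (\<exists>t\<in>TT. b \<le> t \<and> t \<le> b + (d-1-i))}"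
  have cSA: "min (card TT) (d-1-k+1) \<le> card SA"
    unfolding SA_def by (rule window_card[OF finite_TT TT_sub]) simp
  have cSB: "min (card TT) (i+1) \<le> card SB"
    unfolding SB_def by (rule window_card[OF finite_TT TT_sub ie])
  have finSA: "finite SA" and finSB: "finite SB" unfolding SA_def SB_def by auto
  define tA where "tA s = (SOME t. t \<in> TT \<and> s \<le> t \<and> t \<le> s + k)" for s
  have tA: "tA s \<in> TT \<and> s \<le> tA s \<and> tA s \<le> s + k" if "s \<in> SA" for s
  proof -
    have "\<exists>t. t \<in> TT \<and> s \<le> t \<and> t \<le> s + k" using that ke unfolding SA_def by auto
    then show ?thesis unfolding tA_def by (rule someI_ex)
  qed
  have SAd: "s \<le> d-1-k" if "s \<in> SA" for s using that unfolding SA_def by auto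
  define wA where "wA s = Dop (k - (tA s - s)) (tA s - s) (QQ (tA s))" for s
  define wB where "wB b = Dop (i - b) b f" for b
  define w where "w x = (case x of Inl s \<Rightarrow> wA s | Inr b \<Rightarrow> wB b)" for x
  define I where "I = Inl ` SA \<union> Inr ` SB"
  have finI: "finite I" unfolding I_def using finSA finSB by auto
  have cardI: "card I = card SA + card SB"
    unfolding I_def using finSA finSB
    by (subst card_Un_disjoint) (auto simp: card_image)
  have sumI: "(\<Sum>x\<in>I. mscale (c x) (w x)) =
     (\<Sum>s\<in>SA. mscale (c (Inl s)) (wA s)) + (\<Sum>b\<in>SB. mscale (c (Inr b)) (wB b))" for c
    unfolding I_def using finSA finSB
    by (subst sum.union_disjoint) (auto simp: sum.reindex w_def)
  have "card I \<le> MS.dim (partials i f)"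
  proof (rule family_dim[OF finite_partials finI])
    show "\<forall>x\<in>I. w x \<in> MS.span (partials i f)"
    proof
      fix x assume "x \<in> I"
      then consider (A) s where "s \<in> SA" "x = Inl s" | (B) b where "b \<in> SB" "x = Inr b"
        unfolding I_def by auto
      then show "w x \<in> MS.span (partials i f)"
      proof cases
        case A
        have "QQ (tA s) \<in> MS.span (partials 1 f)" using QQ tA[OF A(1)] PP_partials by blast
        from Dop_span[OF this, of "k - (tA s - s)" "tA s - s"]
        have "wA s \<in> MS.span (partials (1 + (tA s - s) + (k - (tA s - s))) f)" unfolding wA_def .
        moreover have "1 + (tA s - s) + (k - (tA s - s)) = i" using tA[OF A(1)] i1 unfolding k_def by arith
        ultimately show ?thesis using A by (simp add: w_def del: partials.simps)
      next
        case B
        have "f \<in> MS.span (partials 0 f)" by (simp add: MS.span_base)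
        from Dop_span[OF this, of "i - b" b]
        have "wB b \<in> MS.span (partials (0 + b + (i - b)) f)" unfolding wB_def .
        moreover have "0 + b + (i - b) = i" using B(1) unfolding SB_def by auto
        ultimately show ?thesis using B by (simp add: w_def)
      qed
    qed
  next
    fix c assume c0: "(\<Sum>x\<in>I. mscale (c x) (w x)) = 0"
    have gen: "(\<Sum>b\<in>SB. mscale (c (Inr b)) (Dop (i - b) b (p j))) = 0" if j: "j \<le> n" for j
    proof -
      have jn: "j \<notin> {n+1, n+2}" using j by auto
      have pA: "pdiff j (wA s) = 0" if "s \<in> SA" for s
      proof -
        have "QQ (tA s) \<in> PP" using QQ tA[OF that] by blast
        from only_vars_pdiff_zero[OF Dop_only_vars[OF PP_only_vars[OF this]] jn]
        show ?thesis unfolding wA_def .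
      qed
      have pB: "pdiff j (wB b) = Dop (i - b) b (p j)" for b
        unfolding wB_def by (simp add: Dop_pdiff pj[OF j])
      have "0 = pdiff j (\<Sum>x\<in>I. mscale (c x) (w x))" using c0 by simp
      also have "\<dots> = (\<Sum>s\<in>SA. mscale (c (Inl s)) (pdiff j (wA s))) + (\<Sum>b\<in>SB. mscale (c (Inr b)) (pdiff j (wB b)))"
        by (simp add: sumI pdiff_add pdiff_sum pdiff_mscale)
      also have "\<dots> = (\<Sum>b\<in>SB. mscale (c (Inr b)) (Dop (i - b) b (p j)))"
        by (simp add: pA pB MS.scale_zero_right)
      finally show ?thesis by simp
    qed
    have cB: "\<forall>b\<in>SB. c (Inr b) = 0" by (rule B_zero[OF gen SB_def ie])
    then have "(\<Sum>b\<in>SB. mscale (c (Inr b)) (wB b)) = 0" by (simp add: MS.scale_zero_left)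
    then have "(\<Sum>s\<in>SA. mscale (c (Inl s)) (wA s)) = 0" using c0 sumI by simp
    then have cA: "\<forall>s\<in>SA. c (Inl s) = 0"
      by (intro A_zero[OF finSA ke SAd tA]) (simp_all add: wA_def)
    show "\<forall>x\<in>I. c x = 0" using cA cB unfolding I_def by auto
  qed
  then have "card SA + card SB \<le> hvec f i" by (simp add: hvec_def cardI)
  moreover have "n + 1 \<le> card TT" by (rule card_TT)
  ultimately show ?thesis using cSA cSB id i1 unfolding k_def by (simp add: min_def split: if_splits) arith
qed

lemma Dop_bound_gen:
  assumes "\<forall>k\<in>Poly_Mapping.keys q. Poly_Mapping.lookup k (n+2) \<le> t" "m \<in> Poly_Mapping.keys (Dop a b q)"
  shows "Poly_Mapping.lookup m (n+2) + b \<le> t"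
proof -
  have "m + Poly_Mapping.single (n+1) a + Poly_Mapping.single (n+2) b \<in> Poly_Mapping.keys q"
    using Dop_keys[OF assms(2)] .
  then have "Poly_Mapping.lookup (m + Poly_Mapping.single (n+1) a + Poly_Mapping.single (n+2) b) (n+2) \<le> t"
    using assms(1) by auto
  then show ?thesis by (simp add: lookup_add lookup_single)
qed

lemma Dop_single:
  fixes c :: 'k
  shows "Dop a b (Poly_Mapping.single \<kappa> c) =
    (if a \<le> Poly_Mapping.lookup \<kappa> (n+1) \<and> b \<le> Poly_Mapping.lookup \<kappa> (n+2) then
       Poly_Mapping.single (\<kappa> - Poly_Mapping.single (n+1) a - Poly_Mapping.single (n+2) b)
         (of_nat (pochhammer (Poly_Mapping.lookup \<kappa> (n+1) - a + 1) a) * of_nat (pochhammer (Poly_Mapping.lookup \<kappa> (n+2) - b + 1) b) * c)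
     else 0)"
proof (rule poly_mapping_eqI)
  fix m :: "nat \<Rightarrow>\<^sub>0 nat"
  have iff: "(m + Poly_Mapping.single (n+1) a + Poly_Mapping.single (n+2) b = \<kappa>) \<longleftrightarrow>
     (a \<le> Poly_Mapping.lookup \<kappa> (n+1) \<and> b \<le> Poly_Mapping.lookup \<kappa> (n+2) \<and>
      m = \<kappa> - Poly_Mapping.single (n+1) a - Poly_Mapping.single (n+2) b)"
  proof
    assume h: "m + Poly_Mapping.single (n+1) a + Poly_Mapping.single (n+2) b = \<kappa>"
    have l1: "Poly_Mapping.lookup \<kappa> i = Poly_Mapping.lookup m i + (if i = n+1 then a else 0) + (if i = n+2 then b else 0)" for i
      using h[symmetric] by (simp add: lookup_add lookup_single when_def)
    show "a \<le> Poly_Mapping.lookup \<kappa> (n+1) \<and> b \<le> Poly_Mapping.lookup \<kappa> (n+2) \<and>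
      m = \<kappa> - Poly_Mapping.single (n+1) a - Poly_Mapping.single (n+2) b"
      using l1[of "n+1"] l1[of "n+2"] by (auto intro!: poly_mapping_eqI simp: lookup_minus lookup_single when_def l1)
  next
    assume h: "a \<le> Poly_Mapping.lookup \<kappa> (n+1) \<and> b \<le> Poly_Mapping.lookup \<kappa> (n+2) \<and>
      m = \<kappa> - Poly_Mapping.single (n+1) a - Poly_Mapping.single (n+2) b"
    show "m + Poly_Mapping.single (n+1) a + Poly_Mapping.single (n+2) b = \<kappa>"
      using h by (auto intro!: poly_mapping_eqI simp: lookup_minus lookup_add lookup_single when_def)
  qed
  show "Poly_Mapping.lookup (Dop a b (Poly_Mapping.single \<kappa> c)) m = Poly_Mapping.lookup (if a \<le> Poly_Mapping.lookup \<kappa> (n+1) \<and> b \<le> Poly_Mapping.lookup \<kappa> (n+2) then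
       Poly_Mapping.single (\<kappa> - Poly_Mapping.single (n+1) a - Poly_Mapping.single (n+2) b)
         (of_nat (pochhammer (Poly_Mapping.lookup \<kappa> (n+1) - a + 1) a) * of_nat (pochhammer (Poly_Mapping.lookup \<kappa> (n+2) - b + 1) b) * c)
     else 0) m"
    unfolding Dop_lookup lookup_single when_def
    using iff by (auto simp: lookup_minus lookup_single lookup_add)
qed

end

lemma pdiff_single: "pdiff j (Poly_Mapping.single \<kappa> (c::'k::comm_ring_1)) =
   Poly_Mapping.single (\<kappa> - Poly_Mapping.single j 1) (of_nat (Poly_Mapping.lookup \<kappa> j) * c)"
proof (rule poly_mapping_eqI)
  fix m :: "nat \<Rightarrow>\<^sub>0 nat"
  show "Poly_Mapping.lookup (pdiff j (Poly_Mapping.single \<kappa> c)) m =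
    Poly_Mapping.lookup (Poly_Mapping.single (\<kappa> - Poly_Mapping.single j 1) (of_nat (Poly_Mapping.lookup \<kappa> j) * c)) m"
  proof (cases "Poly_Mapping.lookup \<kappa> j = 0")
    case True
    then have "\<kappa> \<noteq> m + Poly_Mapping.single j 1" by (auto simp: lookup_add)
    then show ?thesis using True by (simp add: lookup_pdiff lookup_single when_def)
  next
    case False
    then show ?thesis using mon_eq_aux[of \<kappa> j m]
      by (auto simp: lookup_pdiff lookup_single when_def lookup_add)
  qed
qed


context perz
begin

definition "MA i = (\<lambda>s. Poly_Mapping.single (Poly_Mapping.single (n+1) (d-i-s) + Poly_Mapping.single (n+2) s) (1::'k)) ` {..min n (d-i)}"
definition "WB i = (\<lambda>b. Dop (i-b) b f) ` {..min n i}"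

lemma MA_span:
  assumes "s \<le> n" "s \<le> d - i"
  shows "Poly_Mapping.single (Poly_Mapping.single (n+1) (d-i-s) + Poly_Mapping.single (n+2) s) (c::'k) \<in> MS.span (MA i \<union> WB i)"
proof -
  have "Poly_Mapping.single (Poly_Mapping.single (n+1) (d-i-s) + Poly_Mapping.single (n+2) s) (1::'k) \<in> MA i \<union> WB i"
    unfolding MA_def using assms by auto
  then have "mscale c (Poly_Mapping.single (Poly_Mapping.single (n+1) (d-i-s) + Poly_Mapping.single (n+2) s) (1::'k)) \<in> MS.span (MA i \<union> WB i)"
    by (intro MS.span_scale MS.span_base)
  moreover have "mscale c (Poly_Mapping.single (Poly_Mapping.single (n+1) (d-i-s) + Poly_Mapping.single (n+2) s) (1::'k))
     = Poly_Mapping.single (Poly_Mapping.single (n+1) (d-i-s) + Poly_Mapping.single (n+2) s) c"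
    by (simp add: mscale_def)
  ultimately show ?thesis by simp
qed

lemma MA_span':
  assumes "s \<le> n" "s \<le> d - i" "u = d - i - s"
  shows "Poly_Mapping.single (Poly_Mapping.single (n+1) u + Poly_Mapping.single (n+2) s) (c::'k) \<in> MS.span (MA i \<union> WB i)"
  using MA_span[OF assms(1,2)] assms(3) by simp

lemma WB_span:
  assumes "b \<le> n" "b \<le> i"
  shows "Dop (i-b) b f \<in> MS.span (MA i \<union> WB i)"
  unfolding WB_def using assms by (intro MS.span_base) auto

lemma f_keys:
  assumes pmon: "\<And>j. j \<le> n \<Longrightarrow> p j = Poly_Mapping.single (kap j) 1" and g0: "g = 0"
    and m: "m \<in> Poly_Mapping.keys f"
  shows "Poly_Mapping.lookup m (n+2) \<le> n \<and> Poly_Mapping.keys m \<subseteq> {..n+2}"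
proof -
  have "Poly_Mapping.lookup f m \<noteq> 0" using m by (simp add: in_keys_iff)
  then have "(\<Sum>j\<le>n. Poly_Mapping.lookup (mvar j * p j) m) \<noteq> 0" by (simp add: fdef g0 lookup_sum)
  then obtain j where j: "j \<le> n" "Poly_Mapping.lookup (mvar j * p j) m \<noteq> 0"
    by (metis (no_types, lifting) atMost_iff sum.neutral)
  then have mj: "Poly_Mapping.lookup m j \<noteq> 0" "Poly_Mapping.lookup (p j) (m - Poly_Mapping.single j 1) \<noteq> 0"
    by (auto simp: lookup_mvar_mult split: if_splits)
  then have eq: "m - Poly_Mapping.single j 1 = kap j" using pmon[OF j(1)] by (simp add: lookup_single when_def split: if_splits)
  have "m = kap j + Poly_Mapping.single j 1" using mon_eq_aux[of m j "kap j"] eq mj(1) by simp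
  then show ?thesis using j(1)
    by (auto simp: kap_def lookup_add lookup_single when_def in_keys_iff split: if_splits)
qed

lemma Dop_f_zero:
  assumes pmon: "\<And>j. j \<le> n \<Longrightarrow> p j = Poly_Mapping.single (kap j) 1" and g0: "g = 0" and b: "n < b"
  shows "Dop a b f = 0"
proof -
  have "\<forall>k\<in>Poly_Mapping.keys f. Poly_Mapping.lookup k (n+2) \<le> n" using f_keys[OF pmon g0] by blast
  then have "\<And>m. m \<in> Poly_Mapping.keys (Dop a b f) \<Longrightarrow> False" using Dop_bound_gen b by fastforce
  then have "Poly_Mapping.keys (Dop a b f) = {}" by blast
  then show ?thesis by simp
qed

lemma pdiff_f_other:
  assumes pmon: "\<And>j. j \<le> n \<Longrightarrow> p j = Poly_Mapping.single (kap j) 1" and g0: "g = 0" and j: "n + 2 < j"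
  shows "pdiff j f = 0"
proof (rule only_vars_pdiff_zero)
  show "only_vars {..n+2} f" unfolding only_vars_def using f_keys[OF pmon g0] by blast
qed (use j in auto)

lemma lookup_kap_U: "Poly_Mapping.lookup (kap t) (n+1) = d - 1 - t"
  by (simp add: kap_def lookup_add lookup_single)

lemma step_elem:
  assumes pmon: "\<And>j. j \<le> n \<Longrightarrow> p j = Poly_Mapping.single (kap j) 1" and g0: "g = 0"
    and x: "x \<in> MA i \<union> WB i" and dn: "n + 1 \<le> d"
  shows "pdiff j x \<in> MS.span (MA (Suc i) \<union> WB (Suc i))"
  using x
proof
  assume "x \<in> MA i"
  then obtain s where s: "s \<le> n" "s \<le> d - i"
    and xs: "x = Poly_Mapping.single (Poly_Mapping.single (n+1) (d-i-s) + Poly_Mapping.single (n+2) s) 1"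
    unfolding MA_def by auto
  define \<kappa> where "\<kappa> = Poly_Mapping.single (n+1) (d-i-s) + Poly_Mapping.single (n+2) s"
  have px: "pdiff j x = Poly_Mapping.single (\<kappa> - Poly_Mapping.single j 1) (of_nat (Poly_Mapping.lookup \<kappa> j))"
    unfolding xs \<kappa>_def[symmetric] by (simp add: pdiff_single)
  consider "j = n+1" | "j = n+2" | "j \<noteq> n+1" "j \<noteq> n+2" by blast
  then show ?thesis
  proof cases
    case 1
    show ?thesis
    proof (cases "d - i - s = 0")
      case True
      then have "pdiff j x = 0" unfolding px using 1 by (simp add: \<kappa>_def lookup_add lookup_single)
      then show ?thesis by (simp add: MS.span_zero)
    next
      case False
      have eq: "\<kappa> - Poly_Mapping.single j 1 = Poly_Mapping.single (n+1) (d - Suc i - s) + Poly_Mapping.single (n+2) s"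
        using 1 False by (intro poly_mapping_eqI) (auto simp: \<kappa>_def lookup_add lookup_minus lookup_single when_def)
      show ?thesis unfolding px eq using s False by (intro MA_span) auto
    qed
  next
    case 2
    show ?thesis
    proof (cases "s = 0")
      case True
      then have "pdiff j x = 0" unfolding px using 2 by (simp add: \<kappa>_def lookup_add lookup_single)
      then show ?thesis by (simp add: MS.span_zero)
    next
      case False
      have eq: "\<kappa> - Poly_Mapping.single j 1 = Poly_Mapping.single (n+1) (d - Suc i - (s - 1)) + Poly_Mapping.single (n+2) (s - 1)"
        using 2 False s by (intro poly_mapping_eqI) (auto simp: \<kappa>_def lookup_add lookup_minus lookup_single when_def)
      show ?thesis unfolding px eq using s False by (intro MA_span) auto
    qed
  next
    case 3
    then have "pdiff j x = 0" unfolding px by (simp add: \<kappa>_def lookup_add lookup_single)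
    then show ?thesis by (simp add: MS.span_zero)
  qed
next
  assume "x \<in> WB i"
  then obtain b where b: "b \<le> n" "b \<le> i" and xb: "x = Dop (i-b) b f"
    unfolding WB_def by auto
  consider "j = n+1" | "j = n+2" | "j \<le> n" | "n + 2 < j" by linarith
  then show ?thesis
  proof cases
    case 1
    have "pdiff j x = Dop (Suc i - b) b f" using 1 b by (simp add: xb Dop_def Suc_diff_le)
    then show ?thesis using b by (simp add: WB_span)
  next
    case 2
    have e: "pdiff j x = Dop (i - b) (Suc b) f" using 2 by (simp add: xb Dop_def pdpow_commute funpow_Suc_right)
    show ?thesis
    proof (cases "b = n")
      case True
      then have "pdiff j x = 0" using e Dop_f_zero[OF pmon g0] by simp
      then show ?thesis by (simp add: MS.span_zero)
    next
      case False
      then show ?thesis using e b WB_span[of "Suc b" "Suc i"] by simp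
    qed
  next
    case 3
    have e: "pdiff j x = Dop (i - b) b (Poly_Mapping.single (kap j) 1)"
      using 3 by (simp add: xb Dop_pdiff pj pmon)
    show ?thesis
    proof (cases "i - b \<le> d - 1 - j \<and> b \<le> j")
      case True
      have eqk: "kap j - Poly_Mapping.single (n+1) (i-b) - Poly_Mapping.single (n+2) b =
        Poly_Mapping.single (n+1) (d - Suc i - (j - b)) + Poly_Mapping.single (n+2) (j - b)"
        using True b by (intro poly_mapping_eqI) (auto simp: kap_def lookup_add lookup_minus lookup_single when_def)
      have pe: "pdiff j x = Poly_Mapping.single (kap j - Poly_Mapping.single (n+1) (i-b) - Poly_Mapping.single (n+2) b)
         (of_nat (pochhammer (Poly_Mapping.lookup (kap j) (n+1) - (i-b) + 1) (i-b)) * of_nat (pochhammer (Poly_Mapping.lookup (kap j) (n+2) - b + 1) b) * 1)"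
        unfolding e Dop_single using True lookup_kap_U[of j] lookup_kap[of j] by simp
      show ?thesis unfolding pe eqk by (rule MA_span') (use True b 3 dn in arith)+
    next
      case False
      then have "pdiff j x = 0" unfolding e Dop_single using lookup_kap_U[of j] lookup_kap[of j] by auto
      then show ?thesis by (simp add: MS.span_zero)
    qed
  next
    case 4
    then have "pdiff j x = 0" by (simp add: xb Dop_pdiff pdiff_f_other[OF pmon g0])
    then show ?thesis by (simp add: MS.span_zero)
  qed
qed

lemma partials_sub:
  assumes pmon: "\<And>j. j \<le> n \<Longrightarrow> p j = Poly_Mapping.single (kap j) 1" and g0: "g = 0"
    and dn: "n + 1 \<le> d" and n1: "1 \<le> n"
  shows "partials (Suc i) f \<subseteq> MS.span (MA (Suc i) \<union> WB (Suc i))"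
proof (induct i)
  case 0
  show ?case
  proof
    fix h assume "h \<in> partials (Suc 0) f"
    then obtain j where h: "h = pdiff j f" by auto
    consider "j \<le> n" | "j = n+1" | "j = n+2" | "n + 2 < j" by linarith
    then show "h \<in> MS.span (MA (Suc 0) \<union> WB (Suc 0))"
    proof cases
      case 1
      have "h = Poly_Mapping.single (Poly_Mapping.single (n+1) (d-1-j) + Poly_Mapping.single (n+2) j) 1"
        using 1 by (simp add: h pj pmon kap_def)
      also have "\<dots> \<in> MS.span (MA (Suc 0) \<union> WB (Suc 0))"
        by (rule MA_span') (use 1 dn in auto)
      finally show ?thesis .
    next
      case 2
      have "h = Dop (Suc 0 - 0) 0 f" using 2 by (simp add: h Dop_def)
      also have "\<dots> \<in> MS.span (MA (Suc 0) \<union> WB (Suc 0))" by (rule WB_span) auto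
      finally show ?thesis .
    next
      case 3
      have "h = Dop (Suc 0 - 1) 1 f" using 3 by (simp add: h Dop_def)
      also have "\<dots> \<in> MS.span (MA (Suc 0) \<union> WB (Suc 0))" by (rule WB_span) (use n1 in auto)
      finally show ?thesis .
    next
      case 4
      then have "h = 0" by (simp add: h pdiff_f_other[OF pmon g0])
      then show ?thesis by (simp add: MS.span_zero)
    qed
  qed
next
  case (Suc i)
  show ?case
  proof
    fix h assume "h \<in> partials (Suc (Suc i)) f"
    then obtain j g' where h: "h = pdiff j g'" and g': "g' \<in> partials (Suc i) f" by auto
    have "g' \<in> MS.span (MA (Suc i) \<union> WB (Suc i))" using Suc g' by blast
    then have "h \<in> MS.span (pdiff j ` (MA (Suc i) \<union> WB (Suc i)))" unfolding h by (rule pdiff_span)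
    moreover have "MS.span (pdiff j ` (MA (Suc i) \<union> WB (Suc i))) \<subseteq> MS.span (MA (Suc (Suc i)) \<union> WB (Suc (Suc i)))"
      by (rule MS.span_minimal) (auto intro: step_elem[OF pmon g0 _ dn])
    ultimately show "h \<in> MS.span (MA (Suc (Suc i)) \<union> WB (Suc (Suc i)))" by blast
  qed
qed

lemma upper:
  assumes pmon: "\<And>j. j \<le> n \<Longrightarrow> p j = Poly_Mapping.single (kap j) 1" and g0: "g = 0"
    and dn: "n + 1 \<le> d" and n1: "1 \<le> n" and i1: "1 \<le> i"
  shows "hvec f i \<le> (min n (d-i) + 1) + (min n i + 1)"
proof -
  obtain i' where i': "i = Suc i'" using i1 by (cases i) auto
  have "hvec f i \<le> card (MA i \<union> WB i)"
    unfolding hvec_def i' by (rule MS.dim_le_card[OF partials_sub[OF pmon g0 dn n1]]) (auto simp: MA_def WB_def)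
  also have "\<dots> \<le> card (MA i) + card (WB i)" by (rule card_Un_le)
  also have "card (MA i) \<le> min n (d-i) + 1" unfolding MA_def by (rule order.trans[OF card_image_le]) auto
  also have "card (WB i) \<le> min n i + 1" unfolding WB_def by (rule order.trans[OF card_image_le]) auto
  finally show ?thesis by simp
qed

end

lemma mvar_pow: "(mvar a :: 'k::comm_ring_1 mpoly) ^ k = Poly_Mapping.single (Poly_Mapping.single a k) 1"
proof (induct k)
  case 0 then show ?case by simp
next
  case (Suc k)
  then show ?case by (simp add: mvar_def mult_single single_add[symmetric] del: single_add)
qed

lemma mdeg_two:
  assumes "a \<noteq> b"
  shows "mdeg (Poly_Mapping.single a x + Poly_Mapping.single b y) = x + y"
proof -
  have "mdeg (Poly_Mapping.single a x + Poly_Mapping.single b y) =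
     sum (Poly_Mapping.lookup (Poly_Mapping.single a x + Poly_Mapping.single b y)) {a, b}"
    unfolding mdeg_def
    by (intro sum.mono_neutral_left) (auto simp: in_keys_iff lookup_add lookup_single when_def split: if_splits)
  then show ?thesis using assms by (simp add: lookup_add lookup_single)
qed

definition p0 :: "nat \<Rightarrow> nat \<Rightarrow> nat \<Rightarrow> 'k::comm_ring_1 mpoly" where
  "p0 n d j = mvar (n+1) ^ (d-1-j) * mvar (n+2) ^ j"

lemma p0_single: "p0 n d j = Poly_Mapping.single (Poly_Mapping.single (n+1) (d-1-j) + Poly_Mapping.single (n+2) j) 1"
  by (simp add: p0_def mvar_pow mult_single)

lemma mconst_single: "mconst c * Poly_Mapping.single \<kappa> (1::'k::comm_ring_1) = Poly_Mapping.single \<kappa> c"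
  by (simp add: mconst_def mult_single)

lemma p0_perz:
  assumes dn: "n + 1 \<le> d"
  shows "perz n d (p0 n d :: nat \<Rightarrow> 'k::field_char_0 mpoly) 0
     (\<Sum>j\<le>n. mvar j * mvar (n+1) ^ (d-1-j) * mvar (n+2) ^ j)"
proof
  fix j assume j: "j \<le> n"
  show "in_uv_forms n (d-1) (p0 n d j :: 'k mpoly)"
    unfolding p0_single in_uv_forms_def only_vars_def homog_of_def using j dn
    by (auto simp: mdeg_two in_keys_iff lookup_add lookup_single when_def split: if_splits)
next
  show "lin_indep_forms n (p0 n d :: nat \<Rightarrow> 'k mpoly)"
    unfolding lin_indep_forms_def
  proof (intro allI impI)
    fix c :: "nat \<Rightarrow> 'k" and j
    assume h: "(\<Sum>j\<le>n. mconst (c j) * p0 n d j) = 0" and j: "j \<le> n"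
    define \<kappa> where "\<kappa> j = Poly_Mapping.single (n+1) (d-1-j) + Poly_Mapping.single (n+2) j" for j
    have inj: "\<kappa> k = \<kappa> j \<longleftrightarrow> k = j" for k
    proof
      assume "\<kappa> k = \<kappa> j"
      then have "Poly_Mapping.lookup (\<kappa> k) (n+2) = Poly_Mapping.lookup (\<kappa> j) (n+2)" by simp
      then show "k = j" by (simp add: \<kappa>_def lookup_add lookup_single)
    qed simp
    have "0 = Poly_Mapping.lookup (\<Sum>k\<le>n. mconst (c k) * p0 n d k) (\<kappa> j)" using h by simp
    also have "\<dots> = (\<Sum>k\<le>n. if k = j then c j else 0)"
      unfolding lookup_sum
    proof (rule sum.cong)
      fix k
      have "mconst (c k) * p0 n d k = Poly_Mapping.single (\<kappa> k) (c k)"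
        unfolding p0_single \<kappa>_def by (rule mconst_single)
      then show "Poly_Mapping.lookup (mconst (c k) * p0 n d k) (\<kappa> j) = (if k = j then c j else 0)"
        using inj[of k] by (simp add: lookup_single when_def)
    qed simp
    also have "\<dots> = c j" using j by simp
    finally show "c j = 0" by simp
  qed
next
  show "in_uv_forms n d (0 :: 'k mpoly)" by (simp add: in_uv_forms_def only_vars_def homog_of_def)
next
  show "(\<Sum>j\<le>n. mvar j * mvar (n+1) ^ (d-1-j) * mvar (n+2) ^ j) = (\<Sum>j\<le>n. mvar j * p0 n d j) + (0::'k mpoly)"
    by (simp add: p0_def mult.assoc)
qed

lemma p0_algdep:
  assumes n2: "2 \<le> n" and dn: "n + 1 \<le> d"
  shows "alg_dep_forms n (p0 n d :: nat \<Rightarrow> 'k::field_char_0 mpoly)"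
  unfolding alg_dep_forms_def
proof (intro exI conjI)
  define m1 :: "nat \<Rightarrow>\<^sub>0 nat" where "m1 = Poly_Mapping.single 0 1 + Poly_Mapping.single 2 1"
  define m2 :: "nat \<Rightarrow>\<^sub>0 nat" where "m2 = Poly_Mapping.single 1 2"
  define F :: "'k mpoly" where "F = Poly_Mapping.single m1 1 - Poly_Mapping.single m2 1"
  have m12: "m1 \<noteq> m2"
  proof
    assume "m1 = m2"
    then have "Poly_Mapping.lookup m1 0 = Poly_Mapping.lookup m2 0" by simp
    then show False by (simp add: m1_def m2_def lookup_add lookup_single)
  qed
  have lF: "Poly_Mapping.lookup F m = (if m = m1 then 1 else if m = m2 then -1 else 0)" for m
    using m12 by (auto simp: F_def lookup_minus lookup_single when_def)
  have kF: "Poly_Mapping.keys F = {m1, m2}"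
    by (auto simp: in_keys_iff lF split: if_splits)
  show "F \<noteq> 0"
  proof
    assume "F = 0"
    then have "Poly_Mapping.lookup F m1 = 0" by simp
    then show False by (simp add: lF)
  qed
  have km1: "Poly_Mapping.keys m1 = {0, 2}"
    by (auto simp: m1_def in_keys_iff lookup_add lookup_single when_def split: if_splits)
  have km2: "Poly_Mapping.keys m2 = {1}" by (simp add: m2_def)
  show "only_vars {..n} F" unfolding only_vars_def kF using km1 km2 n2 by auto
  define K :: "nat \<Rightarrow>\<^sub>0 nat" where "K = Poly_Mapping.single (n+1) (2*(d-2)) + Poly_Mapping.single (n+2) 2"
  have e02: "p0 n d 0 * p0 n d 2 = (Poly_Mapping.single K 1 :: 'k mpoly)"
  proof -
    have "Poly_Mapping.single (n+1) (d-1-0) + Poly_Mapping.single (n+2) 0 + (Poly_Mapping.single (n+1) (d-1-2) + Poly_Mapping.single (n+2) 2) = K"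
      unfolding K_def using n2 dn by (intro poly_mapping_eqI) (auto simp: lookup_add lookup_single when_def)
    then show ?thesis by (simp add: p0_single mult_single)
  qed
  have e11: "p0 n d 1 ^ 2 = (Poly_Mapping.single K 1 :: 'k mpoly)"
  proof -
    have eK: "Poly_Mapping.single (n+1) (d-1-1) + Poly_Mapping.single (n+2) 1 + (Poly_Mapping.single (n+1) (d-1-1) + Poly_Mapping.single (n+2) 1) = K"
      unfolding K_def using n2 dn by (intro poly_mapping_eqI) (auto simp: lookup_add lookup_single when_def)
    have "p0 n d 1 ^ 2 = (Poly_Mapping.single (Poly_Mapping.single (n+1) (d-1-1) + Poly_Mapping.single (n+2) 1 + (Poly_Mapping.single (n+1) (d-1-1) + Poly_Mapping.single (n+2) 1)) 1 :: 'k mpoly)"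
      by (simp only: p0_single power2_eq_square mult_single mult_1)
    then show ?thesis by (simp only: eK)
  qed
  have "msubst (p0 n d) F = mconst 1 * (\<Prod>j\<in>{0,2}. p0 n d j ^ Poly_Mapping.lookup m1 j)
      + mconst (-1) * (\<Prod>j\<in>{1}. p0 n d j ^ Poly_Mapping.lookup m2 j)"
    unfolding msubst_def kF using m12 by (simp add: lF km1 km2)
  also have "\<dots> = mconst 1 * (p0 n d 0 * p0 n d 2) + mconst (-1) * (p0 n d 1 ^ 2)"
    by (simp add: m1_def m2_def lookup_add lookup_single)
  also have "\<dots> = 0" unfolding e02 e11 by (simp add: mconst_mult mscale_m1)
  finally show "msubst (p0 n d) F = 0" .
qed

theorem theorem3p4:
  fixes n d :: nat
  assumes "alg_closed TYPE('k::field_char_0)"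
    and "n \<ge> 2" and "d \<ge> n + 1"
  shows "(\<forall>f::'k mpoly. perazzo_form n d f \<longrightarrow>
            (\<forall>i. 1 \<le> i \<and> i \<le> d div 2 \<longrightarrow>
                 min (2*n+2) (min (d+2) (n+2+i)) \<le> hvec f i))
       \<and> perazzo_form n d
           ((\<Sum>j\<le>n. mvar j * mvar (n+1) ^ (d-1-j) * mvar (n+2) ^ j) :: 'k mpoly)
       \<and> (\<forall>i. 1 \<le> i \<and> i \<le> d div 2 \<longrightarrow>
            hvec ((\<Sum>j\<le>n. mvar j * mvar (n+1) ^ (d-1-j) * mvar (n+2) ^ j) :: 'k mpoly) i
              = min (2*n+2) (min (d+2) (n+2+i)))"
proof (intro conjI allI impI)
  have n2: "2 \<le> n" and dn: "n + 1 \<le> d" using assms by auto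
  {
    fix f :: "'k mpoly" and i :: nat
    assume pf: "perazzo_form n d f" and i: "1 \<le> i \<and> i \<le> d div 2"
    from pf obtain p g where pg: "\<forall>j\<le>n. in_uv_forms n (d - 1) (p j)" "lin_indep_forms n p"
      "in_uv_forms n d g" "f = (\<Sum>j\<le>n. mvar j * p j) + g"
      unfolding perazzo_form_def by blast
    interpret P: perz n d p g f using pg by unfold_locales auto
    show "min (2*n+2) (min (d+2) (n+2+i)) \<le> hvec f i"
      by (rule P.lower) (use i dn n2 in auto)
  }
  define f0 where "f0 = ((\<Sum>j\<le>n. mvar j * mvar (n+1) ^ (d-1-j) * mvar (n+2) ^ j) :: 'k mpoly)"
  interpret E: perz n d "p0 n d" 0 f0 unfolding f0_def by (rule p0_perz[OF dn])
  show "perazzo_form n d ((\<Sum>j\<le>n. mvar j * mvar (n+1) ^ (d-1-j) * mvar (n+2) ^ j) :: 'k mpoly)"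
    unfolding perazzo_form_def f0_def[symmetric]
    using E.puv E.indep p0_algdep[OF n2 dn] E.guv E.fdef by blast
  {
    fix i :: nat assume i: "1 \<le> i \<and> i \<le> d div 2"
    have lo: "min (2*n+2) (min (d+2) (n+2+i)) \<le> hvec f0 i"
      by (rule E.lower) (use i dn n2 in auto)
    have pmon: "p0 n d j = Poly_Mapping.single (E.kap j) 1" if "j \<le> n" for j
      by (simp add: p0_single E.kap_def)
    have up: "hvec f0 i \<le> (min n (d-i) + 1) + (min n i + 1)"
      by (rule E.upper[OF pmon refl dn]) (use i n2 in auto)
    have "(min n (d-i) + 1) + (min n i + 1) \<le> min (2*n+2) (min (d+2) (n+2+i))"
      using i by (simp add: min_def) arith
    with lo up show "hvec ((\<Sum>j\<le>n. mvar j * mvar (n+1) ^ (d-1-j) * mvar (n+2) ^ j) :: 'k mpoly) i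
              = min (2*n+2) (min (d+2) (n+2+i))" unfolding f0_def[symmetric] by linarith
  }
qed

end
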